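(* There is a constant $\Delta_2>0$ (depending only on $r$) such that for every $\eta>0$ there is $\varepsilon_5=\varepsilon_5(\eta)>0$ with the following property: for all large enough $n$, every $m<\varepsilon_5 n$, every $U\subset V_n$ with $|U|=m$ and every $u\in(\eta,r]$ (with $\mathbb P(e(U,U^c)=u|U|)>0$), (i) $\mathbb P\big(|\partial U|\le(u-\eta)|U|\ \big|\ e(U,U^c)=u|U|\big)\le\exp(-\eta m\log(n/m)+\Delta_2 m)$; (ii) $\mathbb P\big(e(U,U^c)-|\partial U|>\eta|U|\big)\le\exp(-\eta m\log(n/m)+\Delta_2 m)$.
   Context: Fix an integer $r\ge3$, let $V_n=\{1,\dots,n\}$ with $rn$ even, and let $\mathbb P$ be the law of the random multigraph $G_n$ on $V_n$ obtained by giving each vertex $r$ half-edges and pairing all $rn$ half-edges uniformly at random. Write $y\sim x$ if $y$ and $x$ are joined by an edge of $G_n$. For $U\subset V_n$: $e(U,U^c)$ is the number of edges (pairs of matched half-edges) with one endpoint in $U$ and the other in $U^c$, and $\partial U:=\{y\in U^c: y\sim x\text{ for some }x\in U\}$. *)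

theory Defs
  imports Complex_Main
begin

text \<open>Configuration model: vertex v in {1..n} carries half-edges (v,i), i < r.
  A pairing is a partition of all half-edges into 2-element sets.\<close>

definition half_edges :: "nat \<Rightarrow> nat \<Rightarrow> (nat \<times> nat) set" where
  "half_edges r n = {1..n} \<times> {..<r}"

definition pairings :: "('a) set \<Rightarrow> 'a set set set" where
  "pairings H = {M. (\<forall>e\<in>M. \<exists>a b. e = {a, b} \<and> a \<noteq> b \<and> a \<in> H \<and> b \<in> H)
                   \<and> (\<forall>h\<in>H. \<exists>!e. e \<in> M \<and> h \<in> e)}"

definition cm_prob :: "nat \<Rightarrow> nat \<Rightarrow> ((nat \<times> nat) set set \<Rightarrow> bool) \<Rightarrow> real" where
  "cm_prob r n A = real (card {M \<in> pairings (half_edges r n). A M})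
                    / real (card (pairings (half_edges r n)))"

definition cm_cond_prob :: "nat \<Rightarrow> nat \<Rightarrow> ((nat \<times> nat) set set \<Rightarrow> bool)
      \<Rightarrow> ((nat \<times> nat) set set \<Rightarrow> bool) \<Rightarrow> real" where
  "cm_cond_prob r n A B = cm_prob r n (\<lambda>M. A M \<and> B M) / cm_prob r n B"

definition e_out :: "(nat \<times> nat) set set \<Rightarrow> nat set \<Rightarrow> nat" where
  "e_out M U = card {e \<in> M. \<exists>a b. e = {a, b} \<and> fst a \<in> U \<and> fst b \<notin> U}"

definition adj :: "(nat \<times> nat) set set \<Rightarrow> nat \<Rightarrow> nat \<Rightarrow> bool" where
  "adj M x y \<longleftrightarrow> (\<exists>e\<in>M. \<exists>a b. e = {a, b} \<and> fst a = x \<and> fst b = y)"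

definition vboundary :: "nat \<Rightarrow> (nat \<times> nat) set set \<Rightarrow> nat set \<Rightarrow> nat set" where
  "vboundary n M U = {y \<in> {1..n} - U. \<exists>x\<in>U. adj M y x}"

end

theory Submission
  imports Defs
begin


definition Hout :: "nat \<Rightarrow> nat \<Rightarrow> nat set \<Rightarrow> (nat \<times> nat) set" where
  "Hout r n U = {h \<in> half_edges r n. fst h \<notin> U}"

definition Bset :: "nat \<Rightarrow> nat \<Rightarrow> nat set \<Rightarrow> (nat \<times> nat) set set \<Rightarrow> (nat \<times> nat) set" where
  "Bset r n U M = {b \<in> Hout r n U. \<exists>a. fst a \<in> U \<and> {a, b} \<in> M}"

lemma pairing_edge:
  assumes "M \<in> pairings H" "e \<in> M"
  shows "\<exists>a b. e = {a, b} \<and> a \<noteq> b \<and> a \<in> H \<and> b \<in> H"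
  using assms unfolding pairings_def by blast

lemma pairing_sub: "M \<in> pairings H \<Longrightarrow> e \<in> M \<Longrightarrow> e \<subseteq> H"
  using pairing_edge by blast

lemma pairing_uniq:
  assumes "M \<in> pairings H" "e1 \<in> M" "e2 \<in> M" "x \<in> e1" "x \<in> e2"
  shows "e1 = e2"
proof -
  have "x \<in> H" using pairing_sub[OF assms(1,2)] assms(4) by blast
  then have "\<exists>!e. e \<in> M \<and> x \<in> e" using assms(1) unfolding pairings_def by blast
  then show ?thesis using assms by blast
qed

lemma pairings_finite: "finite H \<Longrightarrow> finite (pairings H)"
proof -
  assume f: "finite H"
  have "pairings H \<subseteq> Pow (Pow H)" using pairing_sub by blast
  then show ?thesis using f by (meson finite_Pow_iff finite_subset)
qed

lemma pairing_finite: "finite H \<Longrightarrow> M \<in> pairings H \<Longrightarrow> finite M"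
  by (meson PowI finite_Pow_iff finite_subset pairing_sub subsetI)

lemma finite_half_edges: "finite (half_edges r n)"
  unfolding half_edges_def by simp

lemma e_out_Bset:
  assumes M: "M \<in> pairings (half_edges r n)"
  shows "e_out M U = card (Bset r n U M)"
proof -
  define E where "E = {e \<in> M. \<exists>a b. e = {a, b} \<and> fst a \<in> U \<and> fst b \<notin> U}"
  define out where "out e = (SOME b. b \<in> e \<and> fst b \<notin> U)" for e :: "(nat\<times>nat) set"
  have out1: "out {a,b} = b" if "fst a \<in> U" "fst b \<notin> U" for a b
  proof -
    have "\<exists>c. c \<in> {a,b} \<and> fst c \<notin> U" using that by blast
    then have "out {a,b} \<in> {a,b} \<and> fst (out {a,b}) \<notin> U"
      unfolding out_def by (rule someI_ex)
    then show ?thesis using that by auto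
  qed
  have inj: "inj_on out E"
  proof (rule inj_onI)
    fix e1 e2 assume "e1 \<in> E" "e2 \<in> E" "out e1 = out e2"
    then obtain a1 b1 a2 b2 where "e1 = {a1,b1}" "fst a1 \<in> U" "fst b1 \<notin> U"
      "e2 = {a2,b2}" "fst a2 \<in> U" "fst b2 \<notin> U" "e1 \<in> M" "e2 \<in> M"
      unfolding E_def by blast
    then show "e1 = e2" using out1 \<open>out e1 = out e2\<close> pairing_uniq[OF M] by (metis insertCI)
  qed
  have img: "out ` E = Bset r n U M"
  proof
    show "out ` E \<subseteq> Bset r n U M"
    proof
      fix x assume "x \<in> out ` E"
      then obtain a b where ab: "{a,b} \<in> M" "fst a \<in> U" "fst b \<notin> U" "x = b"
        unfolding E_def using out1 by blast
      then have "b \<in> half_edges r n" using pairing_sub[OF M] by blast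
      then show "x \<in> Bset r n U M" unfolding Bset_def Hout_def using ab by blast
    qed
  next
    show "Bset r n U M \<subseteq> out ` E"
    proof
      fix b assume "b \<in> Bset r n U M"
      then obtain a where "fst a \<in> U" "{a,b} \<in> M" "fst b \<notin> U"
        unfolding Bset_def Hout_def by blast
      then have "{a,b} \<in> E" "out {a,b} = b" unfolding E_def using out1 by blast+
      then show "b \<in> out ` E" by force
    qed
  qed
  have "e_out M U = card E" unfolding e_out_def E_def by simp
  also have "\<dots> = card (out ` E)" using card_image[OF inj] by simp
  finally show ?thesis using img by simp
qed

lemma vboundary_Bset:
  assumes M: "M \<in> pairings (half_edges r n)"
  shows "vboundary n M U = fst ` Bset r n U M"
proof
  show "vboundary n M U \<subseteq> fst ` Bset r n U M"
  proof
    fix y assume "y \<in> vboundary n M U"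
    then obtain x e a b where h: "y \<in> {1..n}" "y \<notin> U" "x \<in> U" "e \<in> M" "e = {a,b}" "fst a = y" "fst b = x"
      unfolding vboundary_def adj_def by blast
    then have "a \<in> half_edges r n" using pairing_sub[OF M] by blast
    moreover have "{b,a} \<in> M" using h by (simp add: insert_commute)
    ultimately have "a \<in> Bset r n U M" unfolding Bset_def Hout_def using h by blast
    then show "y \<in> fst ` Bset r n U M" using h by blast
  qed
next
  show "fst ` Bset r n U M \<subseteq> vboundary n M U"
  proof
    fix y assume "y \<in> fst ` Bset r n U M"
    then obtain a b where h: "y = fst b" "b \<in> half_edges r n" "fst b \<notin> U" "fst a \<in> U" "{a,b} \<in> M"
      unfolding Bset_def Hout_def by blast
    have "{b,a} \<in> M" using h by (simp add: insert_commute)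
    then have "adj M y (fst a)" unfolding adj_def using h by blast
    moreover have "y \<in> {1..n}" using h unfolding half_edges_def by auto
    ultimately show "y \<in> vboundary n M U" unfolding vboundary_def using h by blast
  qed
qed

lemma Bset_card_le:
  assumes M: "M \<in> pairings (half_edges r n)" and U: "U \<subseteq> {1..n}"
  shows "card (Bset r n U M) \<le> r * card U"
proof -
  define p where "p b = (SOME a. fst a \<in> U \<and> {a, b} \<in> M)" for b :: "nat \<times> nat"
  have p: "fst (p b) \<in> U \<and> {p b, b} \<in> M" if "b \<in> Bset r n U M" for b
    using that unfolding Bset_def p_def by (smt (verit, del_insts) mem_Collect_eq someI_ex)
  have "inj_on p (Bset r n U M)"
  proof (rule inj_onI)
    fix b1 b2 assume b: "b1 \<in> Bset r n U M" "b2 \<in> Bset r n U M" "p b1 = p b2"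
    have "{p b1, b1} = {p b2, b2}" using pairing_uniq[OF M] p b by (metis insertCI)
    moreover have "fst b1 \<notin> U" "fst b2 \<notin> U" using b unfolding Bset_def Hout_def by auto
    ultimately show "b1 = b2" using p b by (metis doubleton_eq_iff)
  qed
  moreover have "p ` Bset r n U M \<subseteq> U \<times> {..<r}"
  proof
    fix x assume "x \<in> p ` Bset r n U M"
    then obtain b where "b \<in> Bset r n U M" "x = p b" by blast
    then have "fst x \<in> U" "x \<in> half_edges r n" using p pairing_sub[OF M] by blast+
    then show "x \<in> U \<times> {..<r}" unfolding half_edges_def by auto
  qed
  moreover have "finite (U \<times> {..<r})" using U finite_subset by auto
  ultimately have "card (Bset r n U M) \<le> card (U \<times> {..<r})" by (rule card_inj_on_le)
  then show ?thesis by (simp add: card_cartesian_product mult.commute)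
qed



lemma perm_pairings:
  assumes bij: "bij_betw \<pi> H H" and M: "M \<in> pairings H"
  shows "image \<pi> ` M \<in> pairings H"
proof -
  have inj: "inj_on \<pi> H" and img: "\<pi> ` H = H" using bij unfolding bij_betw_def by auto
  have E: "\<exists>a b. e' = {a, b} \<and> a \<noteq> b \<and> a \<in> H \<and> b \<in> H" if e'M: "e' \<in> image \<pi> ` M" for e'
  proof -
    obtain e where e: "e \<in> M" "e' = \<pi> ` e" using e'M by blast
    then obtain a b where "e = {a,b}" "a \<noteq> b" "a \<in> H" "b \<in> H" using pairing_edge[OF M] by blast
    then have "\<pi> a \<noteq> \<pi> b" using inj_onD[OF inj, of a b] by blast
    moreover have "\<pi> a \<in> H" "\<pi> b \<in> H" using img \<open>a \<in> H\<close> \<open>b \<in> H\<close> by blast+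
    moreover have "e' = {\<pi> a, \<pi> b}" using e \<open>e = {a,b}\<close> by simp
    ultimately show ?thesis by blast
  qed
  have U: "\<exists>!e. e \<in> image \<pi> ` M \<and> h \<in> e" if hH: "h \<in> H" for h
  proof -
    obtain h' where h': "h' \<in> H" "h = \<pi> h'" using img hH by blast
    then have "\<exists>e. e \<in> M \<and> h' \<in> e" using M unfolding pairings_def by blast
    then obtain e where e: "e \<in> M" "h' \<in> e" by blast
    have ex: "\<pi> ` e \<in> image \<pi> ` M \<and> h \<in> \<pi> ` e" using e h' by blast
    have un: "f = \<pi> ` e" if fM: "f \<in> image \<pi> ` M" "h \<in> f" for f
    proof -
      obtain e2 where e2: "e2 \<in> M" "f = \<pi> ` e2" using fM by blast
      then obtain x where x: "x \<in> e2" "h = \<pi> x" using fM by blast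
      have "x \<in> H" using pairing_sub[OF M e2(1)] x by blast
      then have "x = h'" using inj_onD[OF inj, of x h'] h' x by simp
      then have "e2 = e" using pairing_uniq[OF M e2(1) e(1)] x e by blast
      then show ?thesis using e2 by simp
    qed
    show ?thesis
    proof (rule ex1I[of _ "\<pi> ` e"])
      show "\<pi> ` e \<in> image \<pi> ` M \<and> h \<in> \<pi> ` e" using ex .
      fix f assume "f \<in> image \<pi> ` M \<and> h \<in> f"
      then show "f = \<pi> ` e" using un by blast
    qed
  qed
  show ?thesis unfolding pairings_def
  proof (intro CollectI conjI ballI)
    fix e assume "e \<in> image \<pi> ` M"
    then show "\<exists>a b. e = {a, b} \<and> a \<noteq> b \<and> a \<in> H \<and> b \<in> H" by (rule E)
  next
    fix h assume "h \<in> H"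
    then show "\<exists>!e. e \<in> image \<pi> ` M \<and> h \<in> e" by (rule U)
  qed
qed

lemma perm_inj:
  assumes "inj_on \<pi> H"
  shows "inj_on (image (image \<pi>)) (pairings H)"
proof -
  have "inj_on (image (image \<pi>)) (Pow (Pow H))"
    by (intro inj_on_image_Pow assms)
  moreover have "pairings H \<subseteq> Pow (Pow H)" using pairing_sub by blast
  ultimately show ?thesis using inj_on_subset by blast
qed

lemma Bset_perm:
  assumes bij: "bij_betw \<pi> (half_edges r n) (half_edges r n)"
    and cls: "\<And>x. x \<in> half_edges r n \<Longrightarrow> (fst (\<pi> x) \<in> U \<longleftrightarrow> fst x \<in> U)"
    and M: "M \<in> pairings (half_edges r n)"
  shows "Bset r n U (image \<pi> ` M) = \<pi> ` Bset r n U M"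
proof
  let ?H = "half_edges r n"
  have inj: "inj_on \<pi> ?H" and img: "\<pi> ` ?H = ?H" using bij unfolding bij_betw_def by auto
  show "Bset r n U (image \<pi> ` M) \<subseteq> \<pi> ` Bset r n U M"
  proof
    fix b' assume "b' \<in> Bset r n U (image \<pi> ` M)"
    then obtain a' e where h: "b' \<in> ?H" "fst b' \<notin> U" "fst a' \<in> U" "e \<in> M" "{a',b'} = \<pi> ` e"
      unfolding Bset_def Hout_def by blast
    obtain x y where xy: "e = {x,y}" "x \<in> ?H" "y \<in> ?H" using pairing_edge[OF M h(4)] by blast
    have "a' \<noteq> b'" using h by auto
    then have "(a' = \<pi> x \<and> b' = \<pi> y) \<or> (a' = \<pi> y \<and> b' = \<pi> x)"
      using h(5) xy(1) by (auto simp: doubleton_eq_iff)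
    then show "b' \<in> \<pi> ` Bset r n U M"
    proof
      assume c: "a' = \<pi> x \<and> b' = \<pi> y"
      have "fst x \<in> U" "fst y \<notin> U" using cls xy h c by auto
      then have "y \<in> Bset r n U M" unfolding Bset_def Hout_def
        using xy h by blast
      then show ?thesis using c by blast
    next
      assume c: "a' = \<pi> y \<and> b' = \<pi> x"
      have "{y,x} \<in> M" using xy h by (simp add: insert_commute)
      moreover have "fst y \<in> U" "fst x \<notin> U" using cls xy h c by auto
      ultimately have "x \<in> Bset r n U M" unfolding Bset_def Hout_def
        using xy h by blast
      then show ?thesis using c by blast
    qed
  qed
next
  let ?H = "half_edges r n"
  show "\<pi> ` Bset r n U M \<subseteq> Bset r n U (image \<pi> ` M)"
  proof
    fix z assume "z \<in> \<pi> ` Bset r n U M"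
    then obtain x y where h: "z = \<pi> y" "y \<in> ?H" "fst y \<notin> U" "fst x \<in> U" "{x,y} \<in> M"
      unfolding Bset_def Hout_def by blast
    have "x \<in> ?H" using pairing_sub[OF M h(5)] by blast
    then have "fst (\<pi> x) \<in> U" using cls h by blast
    moreover have "{\<pi> x, \<pi> y} \<in> image \<pi> ` M"
    proof -
      have "image \<pi> {x,y} \<in> image \<pi> ` M" using h(5) by (rule imageI)
      then show ?thesis by simp
    qed
    moreover have "\<pi> y \<in> ?H" using bij_betwE[OF bij] h(2) by blast
    moreover have "fst (\<pi> y) \<notin> U" using cls[OF h(2)] h(3) by blast
    ultimately show "z \<in> Bset r n U (image \<pi> ` M)" unfolding Bset_def Hout_def using h by blast
  qed
qed

lemma Hout_sub: "Hout r n U \<subseteq> half_edges r n" unfolding Hout_def by auto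

lemma fib_le:
  assumes B1: "B1 \<subseteq> Hout r n U" and B2: "B2 \<subseteq> Hout r n U" and c: "card B1 = card B2"
  shows "card {M \<in> pairings (half_edges r n). Bset r n U M = B1}
       \<le> card {M \<in> pairings (half_edges r n). Bset r n U M = B2}"
proof -
  let ?H = "half_edges r n" and ?O = "Hout r n U"
  have fO: "finite ?O" using finite_subset[OF Hout_sub finite_half_edges] .
  have f1: "finite B1" "finite B2" using B1 B2 fO finite_subset by auto
  obtain f where f: "bij_betw f B1 B2" using finite_same_card_bij[OF f1 c] by blast
  have "card (?O - B1) = card (?O - B2)" using B1 B2 c f1 fO by (simp add: card_Diff_subset)
  then obtain g where g: "bij_betw g (?O - B1) (?O - B2)"
    using finite_same_card_bij fO by blast
  define \<pi> where "\<pi> x = (if x \<in> B1 then f x else if x \<in> ?O then g x else x)" for x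
  have p1: "bij_betw \<pi> B1 B2" using f by (rule bij_betw_cong[THEN iffD1, rotated]) (simp add: \<pi>_def)
  have p2: "bij_betw \<pi> (?O - B1) (?O - B2)" using g by (rule bij_betw_cong[THEN iffD1, rotated]) (simp add: \<pi>_def)
  have p3: "bij_betw \<pi> (?H - ?O) (?H - ?O)"
  proof -
    have "bij_betw id (?H - ?O) (?H - ?O)" by simp
    moreover have "\<forall>x\<in>?H - ?O. \<pi> x = id x" using B1 by (auto simp: \<pi>_def)
    ultimately show ?thesis using bij_betw_cong by metis
  qed
  have "bij_betw \<pi> (B1 \<union> (?O - B1)) (B2 \<union> (?O - B2))"
    by (rule bij_betw_combine[OF p1 p2]) blast
  then have pO: "bij_betw \<pi> ?O ?O" using B1 B2 by (simp add: Un_absorb1 Un_Diff_cancel)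
  have "bij_betw \<pi> (?O \<union> (?H - ?O)) (?O \<union> (?H - ?O))"
    by (rule bij_betw_combine[OF pO p3]) blast
  then have bij: "bij_betw \<pi> ?H ?H" using Hout_sub by (simp add: Un_absorb1 Un_Diff_cancel)
  have cls: "fst (\<pi> x) \<in> U \<longleftrightarrow> fst x \<in> U" if "x \<in> ?H" for x
  proof (cases "x \<in> ?O")
    case True
    then have "\<pi> x \<in> ?O" using pO bij_betwE by blast
    then show ?thesis using True unfolding Hout_def by auto
  next
    case False
    then show ?thesis using B1 by (auto simp: \<pi>_def)
  qed
  have im: "\<pi> ` B1 = B2" using p1 by (simp add: bij_betw_def)
  have injH: "inj_on \<pi> ?H" using bij by (simp add: bij_betw_def)
  show ?thesis
  proof (rule card_inj_on_le[of "image (image \<pi>)"])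
    show "inj_on (image (image \<pi>)) {M \<in> pairings ?H. Bset r n U M = B1}"
      using perm_inj[OF injH] by (rule inj_on_subset) blast
    show "image (image \<pi>) ` {M \<in> pairings ?H. Bset r n U M = B1} \<subseteq> {M \<in> pairings ?H. Bset r n U M = B2}"
    proof
      fix M' assume "M' \<in> image (image \<pi>) ` {M \<in> pairings ?H. Bset r n U M = B1}"
      then obtain M where M: "M \<in> pairings ?H" "Bset r n U M = B1" "M' = image \<pi> ` M" by blast
      have "M' \<in> pairings ?H" using perm_pairings[OF bij M(1)] M(3) by simp
      moreover have "Bset r n U M' = B2" using Bset_perm[OF bij cls M(1)] M(2,3) im by simp
      ultimately show "M' \<in> {M \<in> pairings ?H. Bset r n U M = B2}" by blast
    qed
    show "finite {M \<in> pairings ?H. Bset r n U M = B2}"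
      using pairings_finite[OF finite_half_edges] by simp
  qed
qed



lemma choose_ratio_nat:
  fixes a b k :: nat
  assumes "a \<le> b"
  shows "(a choose k) * b ^ k \<le> (b choose k) * a ^ k"
proof (induction k)
  case 0
  then show ?case by simp
next
  case (Suc k)
  have sa: "Suc k * (a choose Suc k) = (a - k) * (a choose k)"
    using binomial_absorption[of k a] binomial_absorb_comp[of a k] by simp
  have sb: "Suc k * (b choose Suc k) = (b - k) * (b choose k)"
    using binomial_absorption[of k b] binomial_absorb_comp[of b k] by simp
  have key: "(a - k) * b \<le> (b - k) * a"
  proof -
    have "k * a \<le> k * b" using assms by simp
    moreover have "(a - k) * b = a * b - k * b" "(b - k) * a = a * b - k * a"
      by (simp_all add: diff_mult_distrib mult.commute[of b a])
    ultimately show ?thesis by (metis diff_le_mono2)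
  qed
  have "Suc k * ((a choose Suc k) * b ^ Suc k) = (Suc k * (a choose Suc k)) * b ^ k * b"
    by (simp only: power_Suc2 ac_simps)
  also have "\<dots> = ((a - k) * (a choose k)) * b ^ k * b" by (simp only: sa)
  also have "\<dots> = ((a choose k) * b ^ k) * ((a - k) * b)" by (simp only: ac_simps)
  also have "\<dots> \<le> ((b choose k) * a ^ k) * ((a - k) * b)"
    using Suc.IH by (rule mult_right_mono) simp
  also have "\<dots> \<le> ((b choose k) * a ^ k) * ((b - k) * a)"
    using key by (rule mult_left_mono) simp
  also have "\<dots> = ((b - k) * (b choose k)) * a ^ k * a" by (simp only: ac_simps)
  also have "\<dots> = (Suc k * (b choose Suc k)) * a ^ k * a" by (simp only: sb)
  also have "\<dots> = Suc k * ((b choose Suc k) * a ^ Suc k)"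
    by (simp only: power_Suc2 ac_simps)
  finally show ?case by (simp only: mult_le_cancel1)
qed

lemma pow_fact_exp: "real j ^ j \<le> exp (real j) * fact j"
proof (induction j)
  case 0
  then show ?case by simp
next
  case (Suc j)
  show ?case
  proof (cases "j = 0")
    case True
    then show ?thesis using exp_ge_add_one_self[of 1] by simp
  next
    case False
    then have jp: "real j > 0" by simp
    have "(1 + 1 / real j) ^ j \<le> exp 1"
      using exp_ge_one_plus_x_over_n_power_n[of j 1] False by simp
    have eq: "real (Suc j) ^ j = real j ^ j * (1 + 1 / real j) ^ j"
    proof -
      have "real (Suc j) = real j * (1 + 1 / real j)" using jp by (simp add: field_simps)
      then show ?thesis by (simp add: power_mult_distrib)
    qed
    have "real (Suc j) ^ Suc j = real (Suc j) * (real j ^ j * (1 + 1 / real j) ^ j)"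
      using eq by simp
    also have "\<dots> \<le> real (Suc j) * ((exp (real j) * fact j) * exp 1)"
      using Suc.IH \<open>(1 + 1 / real j) ^ j \<le> exp 1\<close>
      by (intro mult_left_mono mult_mono) auto
    also have "\<dots> = exp (real (Suc j)) * fact (Suc j)"
      by (simp add: exp_add algebra_simps)
    finally show ?thesis .
  qed
qed

lemma bad_card:
  fixes V :: "nat set" and r k :: nat and t :: real
  assumes fV: "finite V"
  shows "card {B. B \<subseteq> V \<times> {..<r} \<and> card B = k \<and> t \<le> real k - real (card (fst ` B))}
     \<le> (\<Sum>j\<in>{j\<in>{0..k}. t \<le> real k - real j}. (card V choose j) * (r * j choose k))"
proof -
  define J where "J = {j\<in>{0..k}. t \<le> real k - real j}"
  define S where "S = (\<Union>j\<in>J. \<Union>W\<in>{W. W \<subseteq> V \<and> card W = j}. {B. B \<subseteq> W \<times> {..<r} \<and> card B = k})"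
  have fJ: "finite J" unfolding J_def by simp
  have sub: "{B. B \<subseteq> V \<times> {..<r} \<and> card B = k \<and> t \<le> real k - real (card (fst ` B))} \<subseteq> S"
  proof
    fix B assume "B \<in> {B. B \<subseteq> V \<times> {..<r} \<and> card B = k \<and> t \<le> real k - real (card (fst ` B))}"
    then have B: "B \<subseteq> V \<times> {..<r}" "card B = k" "t \<le> real k - real (card (fst ` B))" by auto
    have fB: "finite B" using B(1) fV finite_subset by blast
    have "card (fst ` B) \<le> k" using card_image_le[OF fB, of fst] B by simp
    then have "card (fst ` B) \<in> J" unfolding J_def using B by simp
    moreover have "fst ` B \<subseteq> V" using B by auto
    moreover have "B \<subseteq> fst ` B \<times> {..<r}" using B by force
    ultimately show "B \<in> S" unfolding S_def using B by blast
  qed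
  have fS: "finite S"
  proof -
    have "S \<subseteq> Pow (V \<times> {..<r})" unfolding S_def by blast
    moreover have "finite (Pow (V \<times> {..<r}))" using fV by simp
    ultimately show ?thesis using finite_subset by blast
  qed
  have "card {B. B \<subseteq> V \<times> {..<r} \<and> card B = k \<and> t \<le> real k - real (card (fst ` B))} \<le> card S"
    using sub fS by (rule card_mono[rotated])
  also have "card S \<le> (\<Sum>j\<in>J. card (\<Union>W\<in>{W. W \<subseteq> V \<and> card W = j}. {B. B \<subseteq> W \<times> {..<r} \<and> card B = k}))"
    unfolding S_def using fJ by (rule card_UN_le)
  also have "\<dots> \<le> (\<Sum>j\<in>J. (card V choose j) * (r * j choose k))"
  proof (rule sum_mono)
    fix j assume "j \<in> J"
    have fW: "finite {W. W \<subseteq> V \<and> card W = j}" using fV by simp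
    have "card (\<Union>W\<in>{W. W \<subseteq> V \<and> card W = j}. {B. B \<subseteq> W \<times> {..<r} \<and> card B = k})
        \<le> (\<Sum>W\<in>{W. W \<subseteq> V \<and> card W = j}. card {B. B \<subseteq> W \<times> {..<r} \<and> card B = k})"
      using fW by (rule card_UN_le)
    also have "\<dots> = (\<Sum>W\<in>{W. W \<subseteq> V \<and> card W = j}. (r * j choose k))"
    proof (rule sum.cong[OF refl])
      fix W assume W: "W \<in> {W. W \<subseteq> V \<and> card W = j}"
      then have "finite W" using fV finite_subset by auto
      then have "card {B. B \<subseteq> W \<times> {..<r} \<and> card B = k} = card (W \<times> {..<r}) choose k"
        by (intro n_subsets) simp
      then show "card {B. B \<subseteq> W \<times> {..<r} \<and> card B = k} = (r * j choose k)"
        using W by (simp add: card_cartesian_product mult.commute)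
    qed
    also have "\<dots> = (card V choose j) * (r * j choose k)" using n_subsets[OF fV] by simp
    finally show "card (\<Union>W\<in>{W. W \<subseteq> V \<and> card W = j}. {B. B \<subseteq> W \<times> {..<r} \<and> card B = k})
        \<le> (card V choose j) * (r * j choose k)" .
  qed
  finally show ?thesis unfolding J_def .
qed



lemma term_bound:
  fixes m n n' j k r :: nat and \<eta> :: real
  assumes r: "r \<ge> 1" and m: "m \<ge> 1" and mn: "2 * m \<le> n" and n': "n' = n - m"
    and jk: "j \<le> k" and km: "k \<le> r * m" and eta: "\<eta> * real m \<le> real k - real j" "\<eta> > 0"
  shows "real (n' choose j) * real (r * j choose k)
     \<le> real (r * n' choose k) * (exp (real (r * m)) * (2 * real r) ^ (r * m) * exp (- \<eta> * real m * ln (real n / real m)))"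
proof (cases "j \<le> n'")
  case False
  then have "n' choose j = 0" by simp
  moreover have "0 \<le> real (r * n' choose k) * (exp (real (r * m)) * (2 * real r) ^ (r * m) * exp (- \<eta> * real m * ln (real n / real m)))"
    by (intro mult_nonneg_nonneg) auto
  ultimately show ?thesis by (simp only: of_nat_0 mult_zero_left)
next
  case True
  have n'pos: "real n' > 0" using m mn n' by simp
  have n'ge: "real n' \<ge> real n / 2" using mn n' by simp
  have npos: "real n > 0" using m mn by simp
  have jrm: "real j \<le> real r * real m"
  proof -
    have "j \<le> r * m" using jk km by simp
    then have "real j \<le> real (r * m)" by (simp only: of_nat_le_iff)
    then show ?thesis by simp
  qed
  have C1: "real (r * j choose k) \<le> real (r * n' choose k) * (real j / real n') ^ k"
  proof -
    have "(r * j choose k) * (r * n') ^ k \<le> (r * n' choose k) * (r * j) ^ k"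
      using True by (intro choose_ratio_nat) simp
    then have "real (r * j choose k) * (real r * real n') ^ k \<le> real (r * n' choose k) * (real r * real j) ^ k"
      by (metis of_nat_le_iff of_nat_mult of_nat_power)
    moreover have "(real r * real j) ^ k = (real j / real n') ^ k * (real r * real n') ^ k"
      using n'pos by (simp add: power_mult_distrib power_divide)
    moreover have "(real r * real n') ^ k > 0" using r n'pos by simp
    ultimately show ?thesis by (simp add: mult.assoc[symmetric]) 
  qed
  have C2: "real (n' choose j) \<le> real n' ^ j / fact j"
  proof -
    have "(n' choose j) * fact j \<le> n' ^ j" by (rule binomial_fact_pow)
    then have "real (n' choose j) * fact j \<le> real n' ^ j"
      by (metis of_nat_fact of_nat_le_iff of_nat_mult of_nat_power)
    then show ?thesis by (simp add: field_simps)
  qed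
  have C3: "real n' ^ j / fact j * (real j / real n') ^ k = real j ^ j / fact j * (real j / real n') ^ (k - j)"
  proof -
    have "(real j / real n') ^ k = (real j / real n') ^ j * (real j / real n') ^ (k - j)"
      using jk by (metis le_add_diff_inverse power_add)
    moreover have "real n' ^ j * (real j / real n') ^ j = real j ^ j"
      using n'pos by (simp add: power_divide)
    ultimately show ?thesis using n'pos by (simp add: field_simps)
  qed
  have C4: "real j ^ j / fact j \<le> exp (real (r * m))"
  proof -
    have "real j ^ j / fact j \<le> exp (real j)" using pow_fact_exp[of j] by (simp add: field_simps)
    also have "\<dots> \<le> exp (real (r * m))" using jrm by simp
    finally show ?thesis .
  qed
  have jle: "real j / real n' \<le> 2 * real r * (real m / real n)"
  proof -
    have "real j \<le> real r * real m" using jrm .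
    then have "real j / real n' \<le> real r * real m / real n'" using n'pos by (simp add: divide_right_mono)
    also have "\<dots> \<le> real r * real m / (real n / 2)"
      using n'ge npos by (intro divide_left_mono) auto
    also have "\<dots> = 2 * real r * (real m / real n)" by simp
    finally show ?thesis .
  qed
  have mnle: "real m / real n \<le> 1" using mn npos by simp
  have mnpos: "real m / real n > 0" using m npos by simp
  have C5: "(real j / real n') ^ (k - j) \<le> (2 * real r) ^ (r * m) * exp (- \<eta> * real m * ln (real n / real m))"
  proof -
    have mnexp: "(real m / real n) ^ (k - j) \<le> exp (- \<eta> * real m * ln (real n / real m))"
    proof -
      have "(real m / real n) ^ (k - j) = (real m / real n) powr (real (k - j))"
        using mnpos by (simp add: powr_realpow)
      also have "\<dots> \<le> (real m / real n) powr (\<eta> * real m)"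
        using eta jk mnle mnpos by (intro powr_mono') (auto simp: of_nat_diff)
      also have "\<dots> = exp (- \<eta> * real m * ln (real n / real m))"
        using mnpos npos m by (simp add: powr_def ln_div algebra_simps)
      finally show ?thesis .
    qed
    have "(real j / real n') ^ (k - j) \<le> (2 * real r * (real m / real n)) ^ (k - j)"
      using jle n'pos by (intro power_mono) auto
    also have "\<dots> = (2 * real r) ^ (k - j) * (real m / real n) ^ (k - j)" by (simp only: power_mult_distrib)
    also have "\<dots> \<le> (2 * real r) ^ (r * m) * (real m / real n) ^ (k - j)"
      using r km by (intro mult_right_mono power_increasing) auto
    also have "\<dots> \<le> (2 * real r) ^ (r * m) * exp (- \<eta> * real m * ln (real n / real m))"
      using mnexp by (intro mult_left_mono) auto
    finally show ?thesis .
  qed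
  have "real (n' choose j) * real (r * j choose k)
      \<le> real n' ^ j / fact j * (real (r * n' choose k) * (real j / real n') ^ k)"
    using C1 C2 by (intro mult_mono) auto
  also have "\<dots> = real (r * n' choose k) * (real n' ^ j / fact j * (real j / real n') ^ k)" by simp
  also have "\<dots> = real (r * n' choose k) * (real j ^ j / fact j * (real j / real n') ^ (k - j))"
    using C3 by simp
  also have "\<dots> \<le> real (r * n' choose k) * (exp (real (r * m)) * ((2 * real r) ^ (r * m) * exp (- \<eta> * real m * ln (real n / real m))))"
    using C4 C5 n'pos by (intro mult_left_mono mult_mono) auto
  finally show ?thesis by (simp add: mult.assoc)
qed



lemma bad_bound:
  fixes V :: "nat set" and r k m n :: nat and \<eta> :: real
  assumes fV: "finite V" and cV: "card V = n - m" and r: "r \<ge> 1" and m: "m \<ge> 1"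
    and mn: "2 * m \<le> n" and km: "k \<le> r * m" and eta: "\<eta> > 0"
  shows "real (card {B. B \<subseteq> V \<times> {..<r} \<and> card B = k \<and> \<eta> * real m \<le> real k - real (card (fst ` B))})
     \<le> real (r * (n - m) choose k) * exp (- \<eta> * real m * ln (real n / real m) + real r * (2 + ln (2 * real r)) * real m)"
proof -
  define J where "J = {j\<in>{0..k}. \<eta> * real m \<le> real k - real j}"
  define \<gamma> where "\<gamma> = exp (real (r * m)) * (2 * real r) ^ (r * m) * exp (- \<eta> * real m * ln (real n / real m))"
  define C where "C = real (r * (n - m) choose k)"
  have \<gamma>0: "\<gamma> \<ge> 0" unfolding \<gamma>_def by simp
  have "card {B. B \<subseteq> V \<times> {..<r} \<and> card B = k \<and> \<eta> * real m \<le> real k - real (card (fst ` B))}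
      \<le> (\<Sum>j\<in>J. (card V choose j) * (r * j choose k))"
    unfolding J_def by (rule bad_card[OF fV])
  then have "real (card {B. B \<subseteq> V \<times> {..<r} \<and> card B = k \<and> \<eta> * real m \<le> real k - real (card (fst ` B))})
      \<le> (\<Sum>j\<in>J. real (card V choose j) * real (r * j choose k))"
    by (metis (no_types, lifting) of_nat_le_iff of_nat_mult of_nat_sum sum.cong)
  also have "\<dots> \<le> (\<Sum>j\<in>J. C * \<gamma>)"
  proof (rule sum_mono)
    fix j assume "j \<in> J"
    then have "j \<le> k" "\<eta> * real m \<le> real k - real j" unfolding J_def by auto
    then show "real (card V choose j) * real (r * j choose k) \<le> C * \<gamma>"
      unfolding C_def \<gamma>_def cV using term_bound[OF r m mn refl _ km _ eta] by blast
  qed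
  also have "\<dots> = real (card J) * (C * \<gamma>)" by simp
  also have "\<dots> \<le> exp (real (r * m)) * (C * \<gamma>)"
  proof (rule mult_right_mono)
    have "card J \<le> card {0..k}" unfolding J_def by (intro card_mono) auto
    then have "real (card J) \<le> real k + 1" by simp
    also have "\<dots> \<le> real (r * m) + 1" using km by (simp only: add_le_cancel_right of_nat_le_iff)
    also have "\<dots> \<le> exp (real (r * m))" by (metis add.commute exp_ge_add_one_self)
    finally show "real (card J) \<le> exp (real (r * m))" .
    show "0 \<le> C * \<gamma>" unfolding C_def using \<gamma>0 by simp
  qed
  also have "\<dots> = C * exp (- \<eta> * real m * ln (real n / real m) + real r * (2 + ln (2 * real r)) * real m)"
  proof -
    have "exp (real (r * m) * ln (2 * real r)) = exp (ln (2 * real r)) ^ (r * m)"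
      by (rule exp_of_nat_mult)
    also have "\<dots> = (2 * real r) ^ (r * m)" using r by simp
    finally have "(2 * real r) ^ (r * m) = exp (real (r * m) * ln (2 * real r))" by simp
    then have "exp (real (r * m)) * \<gamma> = exp (- \<eta> * real m * ln (real n / real m) + real r * (2 + ln (2 * real r)) * real m)"
      unfolding \<gamma>_def by (simp add: exp_add[symmetric] algebra_simps)
    then show ?thesis by (simp add: algebra_simps)
  qed
  finally show ?thesis unfolding C_def .
qed



definition fib :: "nat \<Rightarrow> nat \<Rightarrow> nat set \<Rightarrow> (nat \<times> nat) set \<Rightarrow> nat" where
  "fib r n U B = card {M \<in> pairings (half_edges r n). Bset r n U M = B}"

lemma fib_eq:
  assumes "B1 \<subseteq> Hout r n U" "B2 \<subseteq> Hout r n U" "card B1 = card B2"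
  shows "fib r n U B1 = fib r n U B2"
  unfolding fib_def using fib_le[OF assms] fib_le[OF assms(2,1) assms(3)[symmetric]] by simp

lemma finite_Hout: "finite (Hout r n U)"
  using finite_subset[OF Hout_sub finite_half_edges] .

lemma card_fibers:
  assumes Bad: "Bad \<subseteq> Pow (Hout r n U)"
  shows "real (card {M \<in> pairings (half_edges r n). Bset r n U M \<in> Bad}) = (\<Sum>B\<in>Bad. real (fib r n U B))"
proof -
  have "finite (Pow (Hout r n U))" using finite_Hout by simp
  then have fBad: "finite Bad" using Bad finite_subset by blast
  have eq: "{M \<in> pairings (half_edges r n). Bset r n U M \<in> Bad}
      = (\<Union>B\<in>Bad. {M \<in> pairings (half_edges r n). Bset r n U M = B})" by blast
  have "card (\<Union>B\<in>Bad. {M \<in> pairings (half_edges r n). Bset r n U M = B})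
      = (\<Sum>B\<in>Bad. card {M \<in> pairings (half_edges r n). Bset r n U M = B})"
  proof (rule card_UN_disjoint[OF fBad])
    show "\<forall>i\<in>Bad. finite {M \<in> pairings (half_edges r n). Bset r n U M = i}"
      using pairings_finite[OF finite_half_edges] by simp
    show "\<forall>i\<in>Bad. \<forall>j\<in>Bad. i \<noteq> j \<longrightarrow> {M \<in> pairings (half_edges r n). Bset r n U M = i} \<inter> {M \<in> pairings (half_edges r n). Bset r n U M = j} = {}"
      by blast
  qed
  then show ?thesis unfolding eq fib_def by simp
qed

lemma fiber_ratio:
  fixes \<beta> :: real
  assumes b0: "\<beta> \<ge> 0" and Bad: "Bad \<subseteq> {B. B \<subseteq> Hout r n U \<and> card B = k}"
    and cb: "real (card Bad) \<le> \<beta> * real (card {B. B \<subseteq> Hout r n U \<and> card B = k})"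
  shows "(\<Sum>B\<in>Bad. real (fib r n U B)) \<le> \<beta> * (\<Sum>B\<in>{B. B \<subseteq> Hout r n U \<and> card B = k}. real (fib r n U B))"
proof (cases "Bad = {}")
  case True
  have "0 \<le> \<beta> * (\<Sum>B\<in>{B. B \<subseteq> Hout r n U \<and> card B = k}. real (fib r n U B))"
    using b0 by (simp add: sum_nonneg)
  then show ?thesis using True by simp
next
  case False
  then obtain B0 where B0: "B0 \<in> Bad" by blast
  define c where "c = real (fib r n U B0)"
  have B0': "B0 \<subseteq> Hout r n U" "card B0 = k" using B0 Bad by auto
  have const: "real (fib r n U B) = c" if BB: "B \<in> {B. B \<subseteq> Hout r n U \<and> card B = k}" for B
  proof -
    have "B \<subseteq> Hout r n U" "card B = card B0" using BB B0' by auto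
    then show ?thesis unfolding c_def using fib_eq[of B r n U B0] B0'(1) by simp
  qed
  have c0: "c \<ge> 0" unfolding c_def by simp
  have "(\<Sum>B\<in>Bad. real (fib r n U B)) = (\<Sum>B\<in>Bad. c)"
    using const Bad by (intro sum.cong) blast+
  also have "\<dots> = real (card Bad) * c" by simp
  also have "\<dots> \<le> \<beta> * real (card {B. B \<subseteq> Hout r n U \<and> card B = k}) * c"
    using cb c0 by (rule mult_right_mono)
  also have "\<dots> = \<beta> * (\<Sum>B\<in>{B. B \<subseteq> Hout r n U \<and> card B = k}. c)"
    by (simp only: sum_constant)
  also have "\<dots> = \<beta> * (\<Sum>B\<in>{B. B \<subseteq> Hout r n U \<and> card B = k}. real (fib r n U B))"
    using const by (intro arg_cong[where f="\<lambda>x. \<beta> * x"] sum.cong refl) simp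
  finally show ?thesis .
qed

lemma Hout_eq: "Hout r n U = ({1..n} - U) \<times> {..<r}"
  unfolding Hout_def half_edges_def by auto

lemma Bset_sub: "Bset r n U M \<subseteq> Hout r n U" unfolding Bset_def by auto

lemma cm_prob_le1: "cm_prob r n A \<le> 1"
proof -
  have "card {M \<in> pairings (half_edges r n). A M} \<le> card (pairings (half_edges r n))"
    using pairings_finite[OF finite_half_edges] by (intro card_mono) auto
  then show ?thesis unfolding cm_prob_def
    by (cases "card (pairings (half_edges r n)) = 0") (auto simp: divide_le_eq_1)
qed

lemma cm_cond_le1: "cm_prob r n B > 0 \<Longrightarrow> cm_cond_prob r n A B \<le> 1"
proof -
  assume p: "cm_prob r n B > 0"
  have "card {M \<in> pairings (half_edges r n). A M \<and> B M} \<le> card {M \<in> pairings (half_edges r n). B M}"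
    using pairings_finite[OF finite_half_edges] by (intro card_mono) auto
  then have "cm_prob r n (\<lambda>M. A M \<and> B M) \<le> cm_prob r n B"
    unfolding cm_prob_def by (intro divide_right_mono) auto
  then show ?thesis unfolding cm_cond_prob_def using p by (simp add: divide_le_eq_1)
qed


lemma core_k:
  fixes r n m k :: nat and U :: "nat set" and \<eta> :: real and Bad
  assumes r: "r \<ge> 1" and m: "m \<ge> 1" and mn: "2 * m \<le> n" and U: "U \<subseteq> {1..n}" and cU: "card U = m"
    and km: "k \<le> r * m" and eta: "\<eta> > 0"
    and Bad: "Bad \<subseteq> {B. B \<subseteq> Hout r n U \<and> card B = k}"
    and Bcond: "\<And>B. B \<in> Bad \<Longrightarrow> \<eta> * real m \<le> real k - real (card (fst ` B))"
  shows "real (card Bad) \<le> exp (- \<eta> * real m * ln (real n / real m) + real r * (2 + ln (2 * real r)) * real m)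
      * real (card {B. B \<subseteq> Hout r n U \<and> card B = k})"
proof -
  define V where "V = {1..n} - U"
  have fV: "finite V" unfolding V_def by simp
  have cV: "card V = n - m" unfolding V_def using U cU by (simp add: card_Diff_subset finite_subset)
  have O: "Hout r n U = V \<times> {..<r}" unfolding V_def by (rule Hout_eq)
  have sub: "Bad \<subseteq> {B. B \<subseteq> V \<times> {..<r} \<and> card B = k \<and> \<eta> * real m \<le> real k - real (card (fst ` B))}"
    using Bad Bcond O by blast
  have fin: "finite {B. B \<subseteq> V \<times> {..<r} \<and> card B = k \<and> \<eta> * real m \<le> real k - real (card (fst ` B))}"
  proof -
    have "finite (Pow (V \<times> {..<r}))" using fV by simp
    then show ?thesis by (rule finite_subset[rotated]) blast
  qed
  have "card Bad \<le> card {B. B \<subseteq> V \<times> {..<r} \<and> card B = k \<and> \<eta> * real m \<le> real k - real (card (fst ` B))}"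
    using fin sub by (rule card_mono)
  then have "real (card Bad) \<le> real (card {B. B \<subseteq> V \<times> {..<r} \<and> card B = k \<and> \<eta> * real m \<le> real k - real (card (fst ` B))})"
    by (simp only: of_nat_le_iff)
  also have "\<dots> \<le> real (r * (n - m) choose k) * exp (- \<eta> * real m * ln (real n / real m) + real r * (2 + ln (2 * real r)) * real m)"
    by (rule bad_bound[OF fV cV r m mn km eta])
  also have "real (r * (n - m) choose k) = real (card {B. B \<subseteq> Hout r n U \<and> card B = k})"
  proof -
    have "card {B. B \<subseteq> Hout r n U \<and> card B = k} = card (Hout r n U) choose k"
      using finite_Hout by (rule n_subsets)
    moreover have "card (Hout r n U) = r * (n - m)" using O cV fV by (simp add: card_cartesian_product)
    ultimately show ?thesis by simp
  qed
  finally show ?thesis by (simp add: mult.commute)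
qed



lemma main_pos:
  fixes r n m :: nat and U :: "nat set" and u \<eta> :: real
  assumes r: "r \<ge> 1" and m: "m \<ge> 1" and mn: "2 * m \<le> n" and U: "U \<subseteq> {1..n}" and cU: "card U = m"
    and eta: "\<eta> > 0"
    and pos: "cm_prob r n (\<lambda>M. real (e_out M U) = u * real (card U)) > 0"
  defines "\<beta> \<equiv> exp (- \<eta> * real m * ln (real n / real m) + real r * (2 + ln (2 * real r)) * real m)"
  shows "cm_cond_prob r n (\<lambda>M. real (card (vboundary n M U)) \<le> (u - \<eta>) * real (card U))
                        (\<lambda>M. real (e_out M U) = u * real (card U)) \<le> \<beta>"
proof -
  let ?P = "pairings (half_edges r n)"
  let ?O = "Hout r n U"
  have b0: "\<beta> \<ge> 0" unfolding \<beta>_def by simp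
  have fP: "finite ?P" using pairings_finite[OF finite_half_edges] .
  have "card {M \<in> ?P. real (e_out M U) = u * real (card U)} \<noteq> 0"
  proof
    assume "card {M \<in> ?P. real (e_out M U) = u * real (card U)} = 0"
    then have "cm_prob r n (\<lambda>M. real (e_out M U) = u * real (card U)) = 0" unfolding cm_prob_def by simp
    then show False using pos by simp
  qed
  then obtain M0 where M0: "M0 \<in> ?P" "real (e_out M0 U) = u * real (card U)"
    by (metis (mono_tags, lifting) card.empty empty_Collect_eq)
  define k where "k = card (Bset r n U M0)"
  have kdef: "real k = u * real m" using M0 e_out_Bset[OF M0(1)] cU unfolding k_def by simp
  have km: "k \<le> r * m" unfolding k_def using Bset_card_le[OF M0(1) U] cU by simp
  define All where "All = {B. B \<subseteq> ?O \<and> card B = k}"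
  define Bad where "Bad = {B \<in> All. real (card (fst ` B)) \<le> (u - \<eta>) * real m}"
  have S1: "{M \<in> ?P. real (card (vboundary n M U)) \<le> (u - \<eta>) * real (card U) \<and> real (e_out M U) = u * real (card U)}
      = {M \<in> ?P. Bset r n U M \<in> Bad}"
  proof (rule Collect_cong)
    fix M
    show "(M \<in> ?P \<and> real (card (vboundary n M U)) \<le> (u - \<eta>) * real (card U) \<and> real (e_out M U) = u * real (card U))
       = (M \<in> ?P \<and> Bset r n U M \<in> Bad)"
    proof (cases "M \<in> ?P")
      case True
      have "real (e_out M U) = u * real (card U) \<longleftrightarrow> card (Bset r n U M) = k"
        using e_out_Bset[OF True] kdef cU by (metis of_nat_eq_iff)
      then show ?thesis using True vboundary_Bset[OF True] Bset_sub cU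
        unfolding Bad_def All_def by auto
    qed simp
  qed
  have S2: "{M \<in> ?P. real (e_out M U) = u * real (card U)} = {M \<in> ?P. Bset r n U M \<in> All}"
  proof (rule Collect_cong)
    fix M
    show "(M \<in> ?P \<and> real (e_out M U) = u * real (card U)) = (M \<in> ?P \<and> Bset r n U M \<in> All)"
    proof (cases "M \<in> ?P")
      case True
      have "real (e_out M U) = u * real (card U) \<longleftrightarrow> card (Bset r n U M) = k"
        using e_out_Bset[OF True] kdef cU by (metis of_nat_eq_iff)
      then show ?thesis using True Bset_sub unfolding All_def by auto
    qed simp
  qed
  have BadAll: "Bad \<subseteq> All" unfolding Bad_def by auto
  have cBad: "real (card Bad) \<le> \<beta> * real (card All)"
    unfolding \<beta>_def All_def
  proof (rule core_k[OF r m mn U cU km eta])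
    show "Bad \<subseteq> {B. B \<subseteq> Hout r n U \<and> card B = k}" using BadAll unfolding All_def .
    fix B assume "B \<in> Bad"
    then show "\<eta> * real m \<le> real k - real (card (fst ` B))"
      unfolding Bad_def using kdef by (auto simp: algebra_simps)
  qed
  have c1: "real (card {M \<in> ?P. Bset r n U M \<in> Bad}) = (\<Sum>B\<in>Bad. real (fib r n U B))"
    by (rule card_fibers) (use BadAll in \<open>auto simp: All_def\<close>)
  have c2: "real (card {M \<in> ?P. Bset r n U M \<in> All}) = (\<Sum>B\<in>All. real (fib r n U B))"
    by (rule card_fibers) (auto simp: All_def)
  have le: "real (card {M \<in> ?P. Bset r n U M \<in> Bad}) \<le> \<beta> * real (card {M \<in> ?P. Bset r n U M \<in> All})"
    unfolding c1 c2 using fiber_ratio[OF b0 _ cBad[unfolded All_def]] BadAll unfolding All_def by blast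
  have p2: "card {M \<in> ?P. Bset r n U M \<in> All} > 0"
  proof (rule gr0I)
    assume "card {M \<in> ?P. Bset r n U M \<in> All} = 0"
    then have "cm_prob r n (\<lambda>M. real (e_out M U) = u * real (card U)) = 0" unfolding cm_prob_def S2 by simp
    then show False using pos by simp
  qed
  have pP: "card ?P > 0"
  proof (rule gr0I)
    assume "card ?P = 0"
    then have "cm_prob r n (\<lambda>M. real (e_out M U) = u * real (card U)) = 0" unfolding cm_prob_def by simp
    then show False using pos by simp
  qed
  have "cm_cond_prob r n (\<lambda>M. real (card (vboundary n M U)) \<le> (u - \<eta>) * real (card U))
                        (\<lambda>M. real (e_out M U) = u * real (card U))
      = real (card {M \<in> ?P. Bset r n U M \<in> Bad}) / real (card {M \<in> ?P. Bset r n U M \<in> All})"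
    unfolding cm_cond_prob_def cm_prob_def S1[symmetric] S2[symmetric] using pP by simp
  also have "\<dots> \<le> \<beta>" using le p2 by (simp add: divide_le_eq)
  finally show ?thesis .
qed



lemma main_ii:
  fixes r n m :: nat and U :: "nat set" and \<eta> :: real
  assumes r: "r \<ge> 1" and m: "m \<ge> 1" and mn: "2 * m \<le> n" and U: "U \<subseteq> {1..n}" and cU: "card U = m"
    and eta: "\<eta> > 0"
  defines "\<beta> \<equiv> exp (- \<eta> * real m * ln (real n / real m) + real r * (2 + ln (2 * real r)) * real m)"
  shows "cm_prob r n (\<lambda>M. real (e_out M U) - real (card (vboundary n M U)) > \<eta> * real (card U)) \<le> \<beta>"
proof -
  let ?P = "pairings (half_edges r n)"
  let ?O = "Hout r n U"
  have b0: "\<beta> \<ge> 0" unfolding \<beta>_def by simp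
  define All where "All k = {B. B \<subseteq> ?O \<and> card B = k}" for k
  define AllLe where "AllLe = {B. B \<subseteq> ?O \<and> card B \<le> r * m}"
  define Bad where "Bad = {B. B \<subseteq> ?O \<and> card B \<le> r * m \<and> \<eta> * real m < real (card B) - real (card (fst ` B))}"
  have S: "{M \<in> ?P. real (e_out M U) - real (card (vboundary n M U)) > \<eta> * real (card U)}
      = {M \<in> ?P. Bset r n U M \<in> Bad}"
  proof (rule Collect_cong)
    fix M
    show "(M \<in> ?P \<and> real (e_out M U) - real (card (vboundary n M U)) > \<eta> * real (card U))
       = (M \<in> ?P \<and> Bset r n U M \<in> Bad)"
    proof (cases "M \<in> ?P")
      case True
      have "card (Bset r n U M) \<le> r * m" using Bset_card_le[OF True U] cU by simp
      then show ?thesis using True vboundary_Bset[OF True] e_out_Bset[OF True] Bset_sub cU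
        unfolding Bad_def by auto
    qed simp
  qed
  have fO: "finite (Pow ?O)" using finite_Hout by simp
  have BadLe: "Bad \<subseteq> AllLe" unfolding Bad_def AllLe_def by auto
  have fAllLe: "finite AllLe" using fO unfolding AllLe_def by (rule finite_subset[rotated]) blast
  have fBad: "finite Bad" using fAllLe BadLe finite_subset by blast
  have "real (card {M \<in> ?P. Bset r n U M \<in> Bad}) = (\<Sum>B\<in>Bad. real (fib r n U B))"
    by (rule card_fibers) (auto simp: Bad_def)
  also have "\<dots> = (\<Sum>k\<in>{..r*m}. \<Sum>B\<in>{B \<in> Bad. card B = k}. real (fib r n U B))"
    by (rule sum.group[symmetric]) (use fBad in \<open>auto simp: Bad_def\<close>)
  also have "\<dots> \<le> (\<Sum>k\<in>{..r*m}. \<beta> * (\<Sum>B\<in>All k. real (fib r n U B)))"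
  proof (rule sum_mono)
    fix k assume k: "k \<in> {..r*m}"
    have sub: "{B \<in> Bad. card B = k} \<subseteq> {B. B \<subseteq> ?O \<and> card B = k}" unfolding Bad_def by auto
    have "real (card {B \<in> Bad. card B = k}) \<le> \<beta> * real (card {B. B \<subseteq> ?O \<and> card B = k})"
      unfolding \<beta>_def
    proof (rule core_k[OF r m mn U cU _ eta sub])
      show "k \<le> r * m" using k by simp
      fix B assume "B \<in> {B \<in> Bad. card B = k}"
      then show "\<eta> * real m \<le> real k - real (card (fst ` B))" unfolding Bad_def by auto
    qed
    from fiber_ratio[OF b0 sub this]
    show "(\<Sum>B\<in>{B \<in> Bad. card B = k}. real (fib r n U B)) \<le> \<beta> * (\<Sum>B\<in>All k. real (fib r n U B))"
      unfolding All_def .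
  qed
  also have "\<dots> = \<beta> * (\<Sum>k\<in>{..r*m}. \<Sum>B\<in>{B \<in> AllLe. card B = k}. real (fib r n U B))"
  proof -
    have "\<And>k. k \<in> {..r*m} \<Longrightarrow> All k = {B \<in> AllLe. card B = k}" unfolding All_def AllLe_def by auto
    then show ?thesis by (simp add: sum_distrib_left)
  qed
  also have "\<dots> = \<beta> * (\<Sum>B\<in>AllLe. real (fib r n U B))"
    by (subst sum.group) (use fAllLe in \<open>auto simp: AllLe_def\<close>)
  also have "(\<Sum>B\<in>AllLe. real (fib r n U B)) = real (card {M \<in> ?P. Bset r n U M \<in> AllLe})"
    by (rule card_fibers[symmetric]) (auto simp: AllLe_def)
  also have "\<dots> \<le> real (card ?P)"
    using pairings_finite[OF finite_half_edges] by (simp add: card_mono)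
  finally have le: "real (card {M \<in> ?P. Bset r n U M \<in> Bad}) \<le> \<beta> * real (card ?P)"
    using b0 by (simp add: mult_left_mono)
  show ?thesis
  proof (cases "card ?P = 0")
    case True
    then show ?thesis unfolding cm_prob_def using b0 by simp
  next
    case False
    then show ?thesis unfolding cm_prob_def S using le by (simp add: divide_le_eq)
  qed
qed


theorem lemma4:
  fixes r :: nat
  assumes "r \<ge> 3"
  shows "\<exists>\<Delta>2 > (0::real). \<forall>\<eta> > (0::real). \<exists>\<epsilon>5 > (0::real). \<exists>N::nat. \<forall>n \<ge> N. even (r * n) \<longrightarrow>
    (\<forall>(m::nat) (U::nat set) (u::real).
       real m < \<epsilon>5 * real n \<longrightarrow> U \<subseteq> {1..n} \<longrightarrow> card U = m \<longrightarrow>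
       \<eta> < u \<longrightarrow> u \<le> real r \<longrightarrow>
       cm_prob r n (\<lambda>M. real (e_out M U) = u * real (card U)) > 0 \<longrightarrow>
       cm_cond_prob r n (\<lambda>M. real (card (vboundary n M U)) \<le> (u - \<eta>) * real (card U))
                        (\<lambda>M. real (e_out M U) = u * real (card U))
         \<le> exp (- \<eta> * real m * ln (real n / real m) + \<Delta>2 * real m)
       \<and> cm_prob r n (\<lambda>M. real (e_out M U) - real (card (vboundary n M U)) > \<eta> * real (card U))
         \<le> exp (- \<eta> * real m * ln (real n / real m) + \<Delta>2 * real m))"
proof -
  define \<Delta> where "\<Delta> = real r * (2 + ln (2 * real r))"
  have r1: "r \<ge> 1" using assms by simp
  have "ln (2 * real r) > 0" using assms by (intro ln_gt_zero) simp
  then have l2: "2 + ln (2 * real r) > 0" by linarith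
  have "real r > 0" using r1 by simp
  then have \<Delta>pos: "\<Delta> > 0" unfolding \<Delta>_def using l2 by simp
  have key: "cm_cond_prob r n (\<lambda>M. real (card (vboundary n M U)) \<le> (u - \<eta>) * real (card U))
                        (\<lambda>M. real (e_out M U) = u * real (card U))
         \<le> exp (- \<eta> * real m * ln (real n / real m) + \<Delta> * real m)
       \<and> cm_prob r n (\<lambda>M. real (e_out M U) - real (card (vboundary n M U)) > \<eta> * real (card U))
         \<le> exp (- \<eta> * real m * ln (real n / real m) + \<Delta> * real m)"
    if eta: "\<eta> > 0" and mn: "real m < 1 / 2 * real n" and U: "U \<subseteq> {1..n}" and cU: "card U = m"
      and pos: "cm_prob r n (\<lambda>M. real (e_out M U) = u * real (card U)) > 0"
    for \<eta> :: real and n m :: nat and U :: "nat set" and u :: real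
  proof (cases "m = 0")
    case True
    have e1: "exp (- \<eta> * real m * ln (real n / real m) + \<Delta> * real m) = 1" using True by simp
    show ?thesis unfolding e1 using cm_cond_le1[OF pos] cm_prob_le1 by blast
  next
    case False
    then have m1: "m \<ge> 1" by simp
    have "real (2 * m) < real n" using mn by simp
    then have mn2: "2 * m \<le> n" by (simp only: of_nat_less_iff less_imp_le)
    show ?thesis
      using main_pos[OF r1 m1 mn2 U cU eta pos] main_ii[OF r1 m1 mn2 U cU eta]
      unfolding \<Delta>_def by (simp add: mult.assoc)
  qed
  show ?thesis
    apply (rule exI[of _ \<Delta>])
    apply (intro conjI \<Delta>pos allI impI)
    apply (rule exI[of _ "1/2"])
    apply (intro conjI)
     apply simp
    apply (rule exI[of _ 0])
    using key by blast
qed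

end
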